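(* For every $n\ge1$ there are bijections $\varphi:\mathfrak{S}_n(213)\to\mathfrak{S}_n(312)$ and $\eta:\mathfrak{S}_n(132)\to\mathfrak{S}_n(231)$ preserving the descent set $\{i\in[n-1]:\pi_i>\pi_{i+1}\}$. Consequently $|\mathcal{B}_n(213)|=|\mathcal{B}_n(312)|$ and $|\mathcal{B}_n(132)|=|\mathcal{B}_n(231)|$ for all $n\ge1$.
   Context: $\mathfrak{S}_n(\sigma)$ is the set of permutations in $\mathfrak{S}_n$ with no subsequence order-isomorphic to the pattern $\sigma$. A ballot permutation is a $\pi\in\mathfrak{S}_n$ such that every prefix $\pi_1\cdots\pi_i$ has at most as many descents ($\pi_j>\pi_{j+1}$) as ascents ($\pi_j<\pi_{j+1}$); $\mathcal{B}_n(\sigma)$ is the set of $\sigma$-avoiding ballot permutations in $\mathfrak{S}_n$. *)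

theory Defs
  imports Main
begin

definition perms :: "nat \<Rightarrow> nat list set" where
  "perms n = {xs. length xs = n \<and> distinct xs \<and> set xs = {1..n}}"

definition contains_pattern :: "nat list \<Rightarrow> nat list \<Rightarrow> bool" where
  "contains_pattern p \<sigma> \<longleftrightarrow>
     (\<exists>idx :: nat \<Rightarrow> nat.
        (\<forall>i j. i < j \<and> j < length \<sigma> \<longrightarrow> idx i < idx j) \<and>
        (\<forall>i < length \<sigma>. idx i < length p) \<and>
        (\<forall>i < length \<sigma>. \<forall>j < length \<sigma>. (p ! idx i < p ! idx j) \<longleftrightarrow> (\<sigma> ! i < \<sigma> ! j)))"

definition avoiders :: "nat \<Rightarrow> nat list \<Rightarrow> nat list set" where
  "avoiders n \<sigma> = {p \<in> perms n. \<not> contains_pattern p \<sigma>}"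

text \<open>Descent set {i in [n-1] : pi_i > pi_(i+1)}, positions 1-based.\<close>
definition descent_set :: "nat list \<Rightarrow> nat set" where
  "descent_set p = {i. 1 \<le> i \<and> i < length p \<and> p ! (i - 1) > p ! i}"

definition ballot :: "nat list \<Rightarrow> bool" where
  "ballot p \<longleftrightarrow> (\<forall>k \<le> length p.
     card {j. 1 \<le> j \<and> j < k \<and> p ! (j - 1) > p ! j}
       \<le> card {j. 1 \<le> j \<and> j < k \<and> p ! (j - 1) < p ! j})"

definition ballot_avoiders :: "nat \<Rightarrow> nat list \<Rightarrow> nat list set" where
  "ballot_avoiders n \<sigma> = {p \<in> avoiders n \<sigma>. ballot p}"

end

theory Submission
  imports Defs
begin


definition c3 :: "(nat \<Rightarrow> nat \<Rightarrow> nat \<Rightarrow> bool) \<Rightarrow> nat list \<Rightarrow> bool" where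
  "c3 P xs \<longleftrightarrow> (\<exists>i j k. i < j \<and> j < k \<and> k < length xs \<and> P (xs!i) (xs!j) (xs!k))"

lemma less3_all: "(\<forall>i<(3::nat). Q i) \<longleftrightarrow> Q 0 \<and> Q 1 \<and> Q 2"
  by (auto simp: less_Suc_eq numeral_3_eq_3 numeral_2_eq_2)

lemma contains3:
  "contains_pattern p [a,b,c] \<longleftrightarrow> c3 (\<lambda>x y z. (x<y \<longleftrightarrow> a<b) \<and> (y<x \<longleftrightarrow> b<a) \<and> (x<z \<longleftrightarrow> a<c)
      \<and> (z<x \<longleftrightarrow> c<a) \<and> (y<z \<longleftrightarrow> b<c) \<and> (z<y \<longleftrightarrow> c<b)) p" (is "_ \<longleftrightarrow> c3 ?Q p")
proof
  assume "contains_pattern p [a,b,c]"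
  then obtain idx where h1: "\<forall>i j. i < j \<and> j < length [a,b,c] \<longrightarrow> idx i < idx j"
    and h2: "\<forall>i < length [a,b,c]. idx i < length p"
    and h3: "\<forall>i < length [a,b,c]. \<forall>j < length [a,b,c]. (p ! idx i < p ! idx j) \<longleftrightarrow> ([a,b,c] ! i < [a,b,c] ! j)"
    unfolding contains_pattern_def by blast
  have "idx 0 < idx 1" "idx 1 < idx 2" "idx 2 < length p" using h1 h2 by auto
  moreover have "(p ! idx i < p ! idx j) \<longleftrightarrow> ([a,b,c] ! i < [a,b,c] ! j)" if "i < 3" "j < 3" for i j
    using h3 that by auto
  ultimately show "c3 ?Q p" unfolding c3_def
    apply -
    apply (rule exI[of _ "idx 0"], rule exI[of _ "idx 1"], rule exI[of _ "idx 2"])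
    by (simp add: less3_all)
next
  assume "c3 ?Q p"
  then obtain i j k where "i < j" "j < k" "k < length p" and Q: "(p!i<p!j \<longleftrightarrow> a<b) \<and> (p!j<p!i \<longleftrightarrow> b<a) \<and> (p!i<p!k \<longleftrightarrow> a<c)
      \<and> (p!k<p!i \<longleftrightarrow> c<a) \<and> (p!j<p!k \<longleftrightarrow> b<c) \<and> (p!k<p!j \<longleftrightarrow> c<b)"
    unfolding c3_def by blast
  define idx where "idx = (\<lambda>t::nat. if t = 0 then i else if t = 1 then j else k)"
  have l3: "length [a,b,c] = 3" by simp
  have A1: "\<forall>s t. s < t \<and> t < length [a,b,c] \<longrightarrow> idx s < idx t"
  proof (intro allI impI)
    fix s t assume "s < t \<and> t < length [a,b,c]"
    then have "(s = 0 \<and> t = 1) \<or> (s = 0 \<and> t = 2) \<or> (s = 1 \<and> t = 2)" by auto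
    then show "idx s < idx t" using \<open>i<j\<close> \<open>j<k\<close> by (auto simp: idx_def)
  qed
  have A2: "\<forall>s < length [a,b,c]. idx s < length p"
    unfolding l3 less3_all using \<open>i<j\<close> \<open>j<k\<close> \<open>k<length p\<close> by (simp add: idx_def)
  have A3: "\<forall>s < length [a,b,c]. \<forall>t < length [a,b,c]. (p ! idx s < p ! idx t) \<longleftrightarrow> ([a,b,c] ! s < [a,b,c] ! t)"
    unfolding l3 less3_all using Q by (simp add: idx_def)
  show "contains_pattern p [a,b,c]" unfolding contains_pattern_def using A1 A2 A3 by blast
qed

lemma nthR: "t > length L \<Longrightarrow> (L@m#R)!t = R!(t - Suc (length L))"
  by (simp add: nth_append)

lemma nthL: "t < length L \<Longrightarrow> (L@m#R)!t = L!t"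
  by (simp add: nth_append)

lemma c3_split:
  assumes "c3 P (L @ m # R)"
  shows "c3 P L \<or> c3 P R \<or> (\<exists>x\<in>set L. \<exists>y\<in>set L. \<exists>z\<in>insert m (set R). P x y z)
    \<or> (\<exists>x\<in>set L. \<exists>y\<in>insert m (set R). \<exists>z\<in>set R. P x y z)
    \<or> (\<exists>y\<in>set R. \<exists>z\<in>set R. P m y z)"
proof -
  obtain i j k where ijk: "i<j" "j<k" "k < length (L @ m # R)" and P: "P ((L@m#R)!i) ((L@m#R)!j) ((L@m#R)!k)"
    using assms unfolding c3_def by blast
  let ?p = "length L"
  have memR: "t < length (L@m#R) \<Longrightarrow> t > ?p \<Longrightarrow> (L@m#R)!t \<in> set R" for t
    using nthR[of L t m R] by simp
  have memL: "t < ?p \<Longrightarrow> (L@m#R)!t \<in> set L" for t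
    using nthL[of t L m R] by simp
  have memM: "t < length (L@m#R) \<Longrightarrow> t \<ge> ?p \<Longrightarrow> (L@m#R)!t \<in> insert m (set R)" for t
    using memR[of t] by (cases "t = ?p") simp_all
  show ?thesis
  proof (cases "k < ?p")
    case True
    then have "c3 P L" unfolding c3_def using ijk P nthL[of i L m R] nthL[of j L m R] nthL[of k L m R]
      by (intro exI[of _ i] exI[of _ j] exI[of _ k]) simp
    then show ?thesis by blast
  next
    case kp: False
    show ?thesis
    proof (cases "i > ?p")
      case True
      have ix: "i - Suc ?p < j - Suc ?p" "j - Suc ?p < k - Suc ?p" "k - Suc ?p < length R"
        using ijk True by auto
      have "c3 P R" unfolding c3_def
        apply (rule exI[of _ "i - Suc ?p"], rule exI[of _ "j - Suc ?p"], rule exI[of _ "k - Suc ?p"])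
        using ix P nthR[OF True, of m R] nthR[OF less_trans[OF True ijk(1)], of m R]
           nthR[OF less_trans[OF less_trans[OF True ijk(1)] ijk(2)], of m R] by simp
      then show ?thesis by blast
    next
      case ip: False
      show ?thesis
      proof (cases "i = ?p")
        case True
        then have "(L@m#R)!i = m" by simp
        then have P': "P m ((L@m#R)!j) ((L@m#R)!k)" using P by simp
        have "(L@m#R)!j \<in> set R" "(L@m#R)!k \<in> set R" by (rule memR; insert ijk True; linarith)+
        then have "\<exists>y\<in>set R. \<exists>z\<in>set R. P m y z" using P' by blast
        then show ?thesis by blast
      next
        case False
        with ip have i: "i < ?p" by simp
        then have xi: "(L@m#R)!i \<in> set L" by (rule memL)
        show ?thesis
        proof (cases "j < ?p")
          case True
          then have "(L@m#R)!j \<in> set L" by (rule memL)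
          moreover have "(L@m#R)!k \<in> insert m (set R)" by (rule memM; insert ijk kp; linarith)
          ultimately have "\<exists>x\<in>set L. \<exists>y\<in>set L. \<exists>z\<in>insert m (set R). P x y z" using xi P by blast
          then show ?thesis by blast
        next
          case False
          have "(L@m#R)!j \<in> insert m (set R)" by (rule memM; insert ijk False; linarith)
          moreover have "(L@m#R)!k \<in> set R" by (rule memR; insert ijk False; linarith)
          ultimately have "\<exists>x\<in>set L. \<exists>y\<in>insert m (set R). \<exists>z\<in>set R. P x y z" using xi P by blast
          then show ?thesis by blast
        qed
      qed
    qed
  qed
qed

lemma c3_mid:
  assumes "x \<in> set L" "y \<in> set R" "P x m y" shows "c3 P (L @ m # R)"
proof -
  obtain i where i: "i < length L" "L!i = x" using assms(1) by (auto simp: in_set_conv_nth)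
  obtain k where k: "k < length R" "R!k = y" using assms(2) by (auto simp: in_set_conv_nth)
  show ?thesis unfolding c3_def
    by (rule exI[of _ i], rule exI[of _ "length L"], rule exI[of _ "length L + Suc k"])
       (use i k assms(3) in \<open>auto simp: nth_append\<close>)
qed

lemma c3_left: "c3 P L \<Longrightarrow> c3 P (L @ R)"
  unfolding c3_def
proof (elim exE conjE)
  fix i j k assume "i<j" "j<k" "k<length L" "P (L!i) (L!j) (L!k)"
  then show "\<exists>i j k. i < j \<and> j < k \<and> k < length (L @ R) \<and> P ((L @ R) ! i) ((L @ R) ! j) ((L @ R) ! k)"
    by (intro exI[of _ i] exI[of _ j] exI[of _ k]) (simp add: nth_append)
qed

lemma c3_right: "c3 P R \<Longrightarrow> c3 P (L @ R)"
  unfolding c3_def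
proof (elim exE conjE)
  fix i j k assume "i<j" "j<k" "k<length R" "P (R!i) (R!j) (R!k)"
  then show "\<exists>i j k. i < j \<and> j < k \<and> k < length (L @ R) \<and> P ((L @ R) ! i) ((L @ R) ! j) ((L @ R) ! k)"
    by (intro exI[of _ "length L + i"] exI[of _ "length L + j"] exI[of _ "length L + k"]) (auto simp: nth_append)
qed



datatype tr = Lf | Nd tr tr

fun sz :: "tr \<Rightarrow> nat" where "sz Lf = 0" | "sz (Nd l r) = sz l + sz r + 1"

fun bA :: "tr \<Rightarrow> nat \<Rightarrow> nat list" where
  "bA Lf b = []"
| "bA (Nd l r) b = bA l (b + 1 + sz r) @ (b+1) # bA r (b+1)"

fun bB :: "tr \<Rightarrow> nat \<Rightarrow> nat list" where
  "bB Lf b = []"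
| "bB (Nd l r) b = bB l (b+1) @ (b+1) # bB r (b + 1 + sz l)"

lemma bA_basic: "length (bA t b) = sz t \<and> distinct (bA t b) \<and> set (bA t b) = {b+1..b+sz t}"
proof (induction t arbitrary: b)
  case Lf then show ?case by simp
next
  case (Nd l r)
  have L: "length (bA l (b+1+sz r)) = sz l \<and> distinct (bA l (b+1+sz r)) \<and> set (bA l (b+1+sz r)) = {b+1+sz r+1..b+1+sz r+sz l}"
    using Nd.IH(1) .
  have R: "length (bA r (b+1)) = sz r \<and> distinct (bA r (b+1)) \<and> set (bA r (b+1)) = {b+1+1..b+1+sz r}"
    using Nd.IH(2) .
  have S: "{b+1+sz r+1..b+1+sz r+sz l} \<union> insert (b+1) {b+1+1..b+1+sz r} = {b+1..b+sz (Nd l r)}"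
    by auto
  show ?case using L R S by auto
qed

lemma bB_basic: "length (bB t b) = sz t \<and> distinct (bB t b) \<and> set (bB t b) = {b+1..b+sz t}"
proof (induction t arbitrary: b)
  case Lf then show ?case by simp
next
  case (Nd l r)
  have L: "length (bB l (b+1)) = sz l \<and> distinct (bB l (b+1)) \<and> set (bB l (b+1)) = {b+1+1..b+1+sz l}"
    using Nd.IH(1) .
  have R: "length (bB r (b+1+sz l)) = sz r \<and> distinct (bB r (b+1+sz l)) \<and> set (bB r (b+1+sz l)) = {b+1+sz l+1..b+1+sz l+sz r}"
    using Nd.IH(2) .
  have S: "{b+1+1..b+1+sz l} \<union> insert (b+1) {b+1+sz l+1..b+1+sz l+sz r} = {b+1..b+sz (Nd l r)}"
    by auto
  show ?case using L R S by auto
qed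

lemma bA_inj: "bA t b = bA t' b \<Longrightarrow> t = t'"
proof (induction t arbitrary: t' b)
  case Lf then show ?case by (cases t') auto
next
  case (Nd l r)
  show ?case
  proof (cases t')
    case Lf then show ?thesis using Nd.prems by simp
  next
    case (Nd l' r')
    have n1: "b+1 \<notin> set (bA l (b+1+sz r))" "b+1 \<notin> set (bA r (b+1))" using bA_basic by auto
    have eq: "bA l (b+1+sz r) @ (b+1) # bA r (b+1) = bA l' (b+1+sz r') @ (b+1) # bA r' (b+1)"
      using Nd.prems Nd by simp
    have "bA l (b+1+sz r) = bA l' (b+1+sz r') \<and> bA r (b+1) = bA r' (b+1)"
      using append_Cons_eq_iff[OF n1, THEN iffD1, OF eq] .
    then have "r = r'" "bA l (b+1+sz r) = bA l' (b+1+sz r')" using Nd.IH(2) by auto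
    then have "l = l'" using Nd.IH(1) by simp
    then show ?thesis using \<open>r = r'\<close> Nd by simp
  qed
qed

lemma bB_inj: "bB t b = bB t' b \<Longrightarrow> t = t'"
proof (induction t arbitrary: t' b)
  case Lf then show ?case by (cases t') auto
next
  case (Nd l r)
  show ?case
  proof (cases t')
    case Lf then show ?thesis using Nd.prems by simp
  next
    case (Nd l' r')
    have n1: "b+1 \<notin> set (bB l (b+1))" "b+1 \<notin> set (bB r (b+1+sz l))" using bB_basic by auto
    have eq: "bB l (b+1) @ (b+1) # bB r (b+1+sz l) = bB l' (b+1) @ (b+1) # bB r' (b+1+sz l')"
      using Nd.prems Nd by simp
    have "bB l (b+1) = bB l' (b+1) \<and> bB r (b+1+sz l) = bB r' (b+1+sz l')"
      using append_Cons_eq_iff[OF n1, THEN iffD1, OF eq] .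
    then have "l = l'" "bB r (b+1+sz l) = bB r' (b+1+sz l')" using Nd.IH(1) by auto
    then have "r = r'" using Nd.IH(2) by simp
    then show ?thesis using \<open>l = l'\<close> Nd by simp
  qed
qed



definition P213 :: "nat \<Rightarrow> nat \<Rightarrow> nat \<Rightarrow> bool" where "P213 x y z \<longleftrightarrow> y < x \<and> x < z"
definition P312 :: "nat \<Rightarrow> nat \<Rightarrow> nat \<Rightarrow> bool" where "P312 x y z \<longleftrightarrow> y < z \<and> z < x"

lemma bA_avoid: "\<not> c3 P213 (bA t b)"
proof (induction t arbitrary: b)
  case Lf then show ?case by (simp add: c3_def)
next
  case (Nd l r)
  let ?L = "bA l (b+1+sz r)" and ?R = "bA r (b+1)"
  have sL: "set ?L = {b+1+sz r+1..b+1+sz r+sz l}" using bA_basic by blast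
  have sR: "set ?R = {b+1+1..b+1+sz r}" using bA_basic by blast
  have h1: "\<forall>x\<in>set ?L. \<forall>z\<in>insert (b+1) (set ?R). z < x" using sL sR by auto
  have h2: "\<forall>y\<in>set ?R. b+1 < y" using sR by auto
  show ?case
  proof
    assume "c3 P213 (bA (Nd l r) b)"
    then have "c3 P213 (?L @ (b+1) # ?R)" by simp
    from c3_split[OF this] show False
    proof (elim disjE)
      assume "c3 P213 ?L" then show False using Nd.IH(1) by blast
    next
      assume "c3 P213 ?R" then show False using Nd.IH(2) by blast
    next
      assume "\<exists>x\<in>set ?L. \<exists>y\<in>set ?L. \<exists>z\<in>insert (b+1) (set ?R). P213 x y z"
      then obtain x z where xz: "x\<in>set ?L" "z \<in> insert (b+1) (set ?R)" "x < z" unfolding P213_def by blast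
      from h1 xz(1,2) have "z < x" by blast
      with xz(3) show False by linarith
    next
      assume "\<exists>x\<in>set ?L. \<exists>y\<in>insert (b+1) (set ?R). \<exists>z\<in>set ?R. P213 x y z"
      then obtain x z where xz: "x\<in>set ?L" "z \<in> set ?R" "x < z" unfolding P213_def by blast
      from h1 xz(1,2) have "z < x" by blast
      with xz(3) show False by linarith
    next
      assume "\<exists>y\<in>set ?R. \<exists>z\<in>set ?R. P213 (b+1) y z"
      then obtain y where y: "y\<in>set ?R" "y < b+1" unfolding P213_def by blast
      from h2 y(1) have "b+1 < y" by blast
      with y(2) show False by linarith
    qed
  qed
qed

lemma bB_avoid: "\<not> c3 P312 (bB t b)"
proof (induction t arbitrary: b)
  case Lf then show ?case by (simp add: c3_def)
next
  case (Nd l r)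
  let ?L = "bB l (b+1)" and ?R = "bB r (b+1+sz l)"
  have sL: "set ?L = {b+1+1..b+1+sz l}" using bB_basic by blast
  have sR: "set ?R = {b+1+sz l+1..b+1+sz l+sz r}" using bB_basic by blast
  have h1: "\<forall>x\<in>set ?L. \<forall>z\<in>set ?R. x < z" using sL sR by auto
  have h2: "\<forall>y\<in>set ?R \<union> set ?L. b+1 < y" using sR sL by auto
  show ?case
  proof
    assume "c3 P312 (bB (Nd l r) b)"
    then have "c3 P312 (?L @ (b+1) # ?R)" by simp
    from c3_split[OF this] show False
    proof (elim disjE)
      assume "c3 P312 ?L" then show False using Nd.IH(1) by blast
    next
      assume "c3 P312 ?R" then show False using Nd.IH(2) by blast
    next
      assume "\<exists>x\<in>set ?L. \<exists>y\<in>set ?L. \<exists>z\<in>insert (b+1) (set ?R). P312 x y z"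
      then obtain x y z where xz: "x\<in>set ?L" "y \<in> set ?L" "z \<in> insert (b+1) (set ?R)" "y < z" "z < x" unfolding P312_def by blast
      show False
      proof (cases "z = b+1")
        case True
        from h2 xz(2) have "b+1 < y" by blast
        with xz(4) True show False by linarith
      next
        case False
        with xz(3) have "z \<in> set ?R" by simp
        with h1 xz(1) have "x < z" by blast
        with xz(5) show False by linarith
      qed
    next
      assume "\<exists>x\<in>set ?L. \<exists>y\<in>insert (b+1) (set ?R). \<exists>z\<in>set ?R. P312 x y z"
      then obtain x z where xz: "x\<in>set ?L" "z \<in> set ?R" "z < x" unfolding P312_def by blast
      from h1 xz(1,2) have "x < z" by blast
      with xz(3) show False by linarith
    next
      assume "\<exists>y\<in>set ?R. \<exists>z\<in>set ?R. P312 (b+1) y z"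
      then obtain y where y: "y\<in>set ?R" "y < b+1" unfolding P312_def by blast
      from h2 y(1) have "b+1 < y" by blast
      with y(2) show False by linarith
    qed
  qed
qed

lemma dc:
  assumes "A \<union> B = {a..<a+n}" "A \<inter> B = {}" "\<forall>x\<in>A. \<forall>y\<in>B. x<y"
  shows "A = {a..<a+card A}"
proof (cases "A = {}")
  case True then show ?thesis by simp
next
  case False
  have fin: "finite A" using assms(1) by (metis finite_Un finite_atLeastLessThan)
  let ?M = "Max A"
  have MA: "?M \<in> A" using fin False by simp
  have "A = {a..?M}"
  proof
    show "A \<subseteq> {a..?M}" using assms(1) fin by auto
    show "{a..?M} \<subseteq> A"
    proof
      fix x assume x: "x \<in> {a..?M}"
      have "?M < a + n" using MA assms(1) by auto
      then have "x \<in> A \<union> B" using x assms(1) by auto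
      moreover have "x \<notin> B" using assms(3) MA x by fastforce
      ultimately show "x \<in> A" by blast
    qed
  qed
  note eq = this
  have aM: "a \<le> ?M" using MA assms(1) by auto
  have c: "card A = Suc ?M - a"
  proof -
    from eq have "card A = card {a..?M}" by (rule arg_cong)
    also have "\<dots> = Suc ?M - a" by simp
    finally show ?thesis .
  qed
  have "{a..<a + (Suc ?M - a)} = {a..?M}" using aM by auto
  then have "A = {a..<a + (Suc ?M - a)}" using eq by (rule ssubst)
  then show ?thesis unfolding c .
qed



lemma ins_ivl:
  assumes a: "m \<notin> S" and b: "insert m S = {m..N}"
  shows "S = {Suc m..<Suc N}"
proof -
  have "S = insert m S - {m}" using a by auto
  also have "\<dots> = {m..N} - {m}" using b by simp
  also have "\<dots> = {Suc m..<Suc N}" by auto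
  finally show ?thesis .
qed

lemma bA_surj: "distinct xs \<Longrightarrow> set xs = {b+1..b+length xs} \<Longrightarrow> \<not> c3 P213 xs \<Longrightarrow> \<exists>t. sz t = length xs \<and> xs = bA t b"
proof (induction "length xs" arbitrary: xs b rule: less_induct)
  case less
  show ?case
  proof (cases "xs = []")
    case True then show ?thesis by (intro exI[of _ Lf]) simp
  next
    case False
    then have "length xs \<ge> 1" by (cases xs) auto
    then have "b+1 \<in> set xs" using less.prems(2) by simp
    then obtain L R where xs: "xs = L @ (b+1) # R" by (meson split_list)
    have dL: "distinct L" and dR: "distinct R" and nL: "b+1 \<notin> set L" and nR: "b+1 \<notin> set R"
      and disj: "set L \<inter> set R = {}" using less.prems(1) xs by auto
    have len: "length xs = length L + length R + 1" using xs by simp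
    have "insert (b+1) (set L \<union> set R) = {b+1..b+length xs}" using less.prems(2) xs by auto
    then have "set L \<union> set R = {Suc (b+1)..<Suc (b+length xs)}" using nL nR by (intro ins_ivl) auto
    then have sLR: "set L \<union> set R = {b+2..<b+1+length xs}" by simp
    have sep: "\<forall>x\<in>set L. \<forall>y\<in>set R. y < x"
    proof (intro ballI, rule ccontr)
      fix x y assume x: "x\<in>set L" "y\<in>set R" "\<not> y<x"
      then have "x \<noteq> y" using disj by auto
      with x(3) have xy: "x < y" by linarith
      have "b+2 \<le> x" using x(1) sLR by auto
      then have "P213 x (b+1) y" using xy unfolding P213_def by linarith
      then have "c3 P213 xs" unfolding xs by (rule c3_mid[OF x(1) x(2)])
      then show False using less.prems(3) by blast
    qed
    have e: "b+2+(length xs - 1) = b+1+length xs" using \<open>length xs \<ge> 1\<close> by simp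
    have sRL: "set R \<union> set L = {b+2..<b+2+(length xs - 1)}" unfolding e using sLR by (simp add: Un_commute)
    have sR0: "set R = {b+2..<b+2+card (set R)}"
      by (rule dc[OF sRL]) (use disj sep in auto)
    have "set R = {b+2..<b+2+length R}" using sR0 distinct_card[OF dR] by simp
    also have "\<dots> = {(b+1)+1..(b+1)+length R}" by auto
    finally have sR: "set R = {(b+1)+1..(b+1)+length R}" .
    have sL: "set L = {(b+1+length R)+1..(b+1+length R)+length L}"
    proof -
      have "set L = (set L \<union> set R) - set R" using disj by auto
      also have "\<dots> = {b+2..<b+1+length xs} - set R" by (simp only: sLR)
      also have "\<dots> = {b+2..<b+1+length xs} - {(b+1)+1..(b+1)+length R}" by (simp only: sR)
      also have "\<dots> = {(b+1+length R)+1..(b+1+length R)+length L}" using len by auto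
      finally show ?thesis .
    qed
    have cR: "\<not> c3 P213 R"
    proof
      assume "c3 P213 R"
      then have "c3 P213 ((L @ [b+1]) @ R)" by (rule c3_right)
      then show False using less.prems(3) xs by simp
    qed
    have cL: "\<not> c3 P213 L"
    proof
      assume "c3 P213 L"
      then have "c3 P213 (L @ (b+1) # R)" by (rule c3_left)
      then show False using less.prems(3) xs by simp
    qed
    obtain tr where tr: "sz tr = length R" "R = bA tr (b+1)"
      using less.hyps[of R "b+1"] len dR sR cR by auto
    obtain tl where tl: "sz tl = length L" "L = bA tl (b+1+length R)"
      using less.hyps[of L "b+1+length R"] len dL sL cL by auto
    show ?thesis
      by (rule exI[of _ "Nd tl tr"]) (simp add: tr tl xs)
  qed
qed

lemma bB_surj: "distinct xs \<Longrightarrow> set xs = {b+1..b+length xs} \<Longrightarrow> \<not> c3 P312 xs \<Longrightarrow> \<exists>t. sz t = length xs \<and> xs = bB t b"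
proof (induction "length xs" arbitrary: xs b rule: less_induct)
  case less
  show ?case
  proof (cases "xs = []")
    case True then show ?thesis by (intro exI[of _ Lf]) simp
  next
    case False
    then have "length xs \<ge> 1" by (cases xs) auto
    then have "b+1 \<in> set xs" using less.prems(2) by simp
    then obtain L R where xs: "xs = L @ (b+1) # R" by (meson split_list)
    have dL: "distinct L" and dR: "distinct R" and nL: "b+1 \<notin> set L" and nR: "b+1 \<notin> set R"
      and disj: "set L \<inter> set R = {}" using less.prems(1) xs by auto
    have len: "length xs = length L + length R + 1" using xs by simp
    have "insert (b+1) (set L \<union> set R) = {b+1..b+length xs}" using less.prems(2) xs by auto
    then have "set L \<union> set R = {Suc (b+1)..<Suc (b+length xs)}" using nL nR by (intro ins_ivl) auto
    then have sLR: "set L \<union> set R = {b+2..<b+1+length xs}" by simp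
    have sep: "\<forall>x\<in>set L. \<forall>y\<in>set R. x < y"
    proof (intro ballI, rule ccontr)
      fix x y assume x: "x\<in>set L" "y\<in>set R" "\<not> x<y"
      then have "x \<noteq> y" using disj by auto
      with x(3) have xy: "y < x" by linarith
      have "b+2 \<le> y" using x(2) sLR by auto
      then have "P312 x (b+1) y" using xy unfolding P312_def by linarith
      then have "c3 P312 xs" unfolding xs by (rule c3_mid[OF x(1) x(2)])
      then show False using less.prems(3) by blast
    qed
    have e: "b+2+(length xs - 1) = b+1+length xs" using \<open>length xs \<ge> 1\<close> by simp
    have sLR': "set L \<union> set R = {b+2..<b+2+(length xs - 1)}" unfolding e using sLR by simp
    have sL0: "set L = {b+2..<b+2+card (set L)}"
      by (rule dc[OF sLR']) (use disj sep in auto)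
    have "set L = {b+2..<b+2+length L}" using sL0 distinct_card[OF dL] by simp
    also have "\<dots> = {(b+1)+1..(b+1)+length L}" by auto
    finally have sL: "set L = {(b+1)+1..(b+1)+length L}" .
    have sR: "set R = {(b+1+length L)+1..(b+1+length L)+length R}"
    proof -
      have "set R = (set L \<union> set R) - set L" using disj by auto
      also have "\<dots> = {b+2..<b+1+length xs} - set L" by (simp only: sLR)
      also have "\<dots> = {b+2..<b+1+length xs} - {(b+1)+1..(b+1)+length L}" by (simp only: sL)
      also have "\<dots> = {(b+1+length L)+1..(b+1+length L)+length R}" using len by auto
      finally show ?thesis .
    qed
    have cR: "\<not> c3 P312 R"
    proof
      assume "c3 P312 R"
      then have "c3 P312 ((L @ [b+1]) @ R)" by (rule c3_right)
      then show False using less.prems(3) xs by simp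
    qed
    have cL: "\<not> c3 P312 L"
    proof
      assume "c3 P312 L"
      then have "c3 P312 (L @ (b+1) # R)" by (rule c3_left)
      then show False using less.prems(3) xs by simp
    qed
    obtain tl where tl: "sz tl = length L" "L = bB tl (b+1)"
      using less.hyps[of L "b+1"] len dL sL cL by auto
    obtain tr where tr: "sz tr = length R" "R = bB tr (b+1+length L)"
      using less.hyps[of R "b+1+length L"] len dR sR cR by auto
    show ?thesis
      by (rule exI[of _ "Nd tl tr"]) (simp add: tr tl xs)
  qed
qed



lemma img_shift: "((i::nat) \<in> (\<lambda>j. j + c) ` D) = (c \<le> i \<and> i - c \<in> D)"
proof
  assume "i \<in> (\<lambda>j. j+c) ` D" then obtain j where "j\<in>D" "i = j + c" by blast
  then show "c \<le> i \<and> i - c \<in> D" by simp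
next
  assume h: "c \<le> i \<and> i - c \<in> D"
  then have "i = (i - c) + c" by simp
  then show "i \<in> (\<lambda>j. j+c) ` D" using h by (intro image_eqI[where x="i - c"]) auto
qed

lemma desc_split:
  assumes mL: "\<forall>x\<in>set L. m < x" and mR: "\<forall>y\<in>set R. m < y"
  shows "descent_set (L @ m # R) = descent_set L \<union> (if length L = 0 then {} else {length L})
          \<union> (\<lambda>j. j + Suc (length L)) ` descent_set R"
proof (rule set_eqI)
  fix i
  let ?xs = "L @ m # R" and ?p = "length L"
  have D: "i \<in> descent_set ?xs \<longleftrightarrow> 1 \<le> i \<and> i < length ?xs \<and> ?xs!(i-1) > ?xs!i"
    by (simp add: descent_set_def)
  have DL: "i \<in> descent_set L \<longleftrightarrow> 1 \<le> i \<and> i < ?p \<and> L!(i-1) > L!i"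
    by (simp add: descent_set_def)
  have DR: "i - Suc ?p \<in> descent_set R \<longleftrightarrow> 1 \<le> i - Suc ?p \<and> i - Suc ?p < length R \<and> R!(i - Suc ?p - 1) > R!(i - Suc ?p)"
    by (simp add: descent_set_def)
  consider (a) "i < ?p" | (b) "i = ?p" | (c) "i = Suc ?p" | (d) "i > Suc ?p" by linarith
  then show "i \<in> descent_set ?xs \<longleftrightarrow> i \<in> descent_set L \<union> (if ?p = 0 then {} else {?p}) \<union> (\<lambda>j. j + Suc ?p) ` descent_set R"
  proof cases
    case a
    have e1: "?xs!i = L!i" using a by (simp add: nth_append)
    have "i - 1 < ?p" using a by linarith
    then have e2: "?xs!(i-1) = L!(i-1)" by (simp add: nth_append)
    have "i \<in> descent_set ?xs \<longleftrightarrow> i \<in> descent_set L" using D DL e1 e2 a by auto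
    moreover have "i \<notin> (\<lambda>j. j + Suc ?p) ` descent_set R" using a img_shift by auto
    ultimately show ?thesis using a by auto
  next
    case b
    have n1: "i \<notin> descent_set L" using DL b by simp
    have n2: "i \<notin> (\<lambda>j. j + Suc ?p) ` descent_set R" using b img_shift by auto
    show ?thesis
    proof (cases "?p = 0")
      case True
      then show ?thesis using D b n1 n2 by simp
    next
      case False
      have e1: "?xs!i = m" using b by simp
      have "L!(i-1) \<in> set L" using False b by simp
      then have e2: "?xs!(i-1) > m" using mL b False by (simp add: nth_append)
      have "i \<in> descent_set ?xs" using D e1 e2 b False by simp
      then show ?thesis using b False by simp
    qed
  next
    case c
    have n1: "i \<notin> descent_set L" using DL c by simp
    have n2: "i \<notin> (\<lambda>j. j + Suc ?p) ` descent_set R" unfolding img_shift using c by (simp add: descent_set_def)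
    have "i \<notin> descent_set ?xs"
    proof
      assume "i \<in> descent_set ?xs"
      then have "i < length ?xs" "?xs!(i-1) > ?xs!i" using D by auto
      then have "R \<noteq> []" "?xs!(i-1) = m" "?xs!i = R!0" using c by (auto simp: nth_append)
      moreover have "R!0 \<in> set R" using \<open>R \<noteq> []\<close> by simp
      ultimately show False using mR \<open>?xs!(i-1) > ?xs!i\<close> by fastforce
    qed
    then show ?thesis using n1 n2 c by simp
  next
    case d
    have n1: "i \<notin> descent_set L" using DL d by simp
    have e1: "?xs!i = R!(i - Suc ?p)" using d by (intro nthR) linarith
    have e2: "?xs!(i-1) = R!(i - Suc ?p - 1)"
    proof -
      have "?xs!(i-1) = R!(i - 1 - Suc ?p)" using d by (intro nthR) linarith
      moreover have "i - 1 - Suc ?p = i - Suc ?p - 1" by simp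
      ultimately show ?thesis by simp
    qed
    have h1: "i \<in> descent_set ?xs \<longleftrightarrow> i - Suc ?p \<in> descent_set R" unfolding D DR e1 e2 using d by auto
    have h2: "i \<in> (\<lambda>j. j + Suc ?p) ` descent_set R \<longleftrightarrow> i - Suc ?p \<in> descent_set R"
      unfolding img_shift using d by simp
    have n3: "i \<notin> (if ?p = 0 then {} else {?p})" using d by simp
    show ?thesis using n1 n3 h1 h2 by blast
  qed
qed

lemma desc_AB: "descent_set (bA t b) = descent_set (bB t b')"
proof (induction t arbitrary: b b')
  case Lf then show ?case by simp
next
  case (Nd l r)
  have a1: "\<forall>x\<in>set (bA l (b+1+sz r)). b+1 < x" "\<forall>x\<in>set (bA r (b+1)). b+1 < x" using bA_basic by auto
  have a2: "\<forall>x\<in>set (bB l (b'+1)). b'+1 < x" "\<forall>x\<in>set (bB r (b'+1+sz l)). b'+1 < x" using bB_basic by auto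
  have l1: "length (bA l (b+1+sz r)) = sz l" "length (bB l (b'+1)) = sz l" using bA_basic bB_basic by auto
  have l2: "bA l (b+1+sz r) = [] \<longleftrightarrow> sz l = 0" "bB l (b'+1) = [] \<longleftrightarrow> sz l = 0"
    using l1 by (metis length_0_conv)+
  show ?case
    using desc_split[OF a1] desc_split[OF a2] l1 l2 Nd.IH(1)[of "b+1+sz r" "b'+1"] Nd.IH(2)[of "b+1" "b'+1+sz l"]
    by simp
qed



definition P132 :: "nat \<Rightarrow> nat \<Rightarrow> nat \<Rightarrow> bool" where "P132 x y z \<longleftrightarrow> x < z \<and> z < y"
definition P231 :: "nat \<Rightarrow> nat \<Rightarrow> nat \<Rightarrow> bool" where "P231 x y z \<longleftrightarrow> z < x \<and> x < y"

lemma c3_cong_on: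
  assumes "\<And>x y z. x\<in>set xs \<Longrightarrow> y\<in>set xs \<Longrightarrow> z\<in>set xs \<Longrightarrow> P x y z = Q x y z"
  shows "c3 P xs = c3 Q xs"
proof
  assume "c3 P xs"
  then obtain i j k where h: "i<j" "j<k" "k<length xs" "P (xs!i) (xs!j) (xs!k)" unfolding c3_def by blast
  have "i < length xs" "j < length xs" using h by linarith+
  then have "Q (xs!i) (xs!j) (xs!k)" using h assms by (simp add: nth_mem)
  then show "c3 Q xs" unfolding c3_def using h by blast
next
  assume "c3 Q xs"
  then obtain i j k where h: "i<j" "j<k" "k<length xs" "Q (xs!i) (xs!j) (xs!k)" unfolding c3_def by blast
  have "i < length xs" "j < length xs" using h by linarith+
  then have "P (xs!i) (xs!j) (xs!k)" using h assms by (simp add: nth_mem)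
  then show "c3 P xs" unfolding c3_def using h by blast
qed

lemma c3_map: "c3 P (map f xs) = c3 (\<lambda>x y z. P (f x) (f y) (f z)) xs"
proof
  assume "c3 P (map f xs)"
  then obtain i j k where h: "i<j" "j<k" "k<length xs" "P (map f xs!i) (map f xs!j) (map f xs!k)" unfolding c3_def by auto
  have "i < length xs" "j < length xs" using h by linarith+
  then have "P (f (xs!i)) (f (xs!j)) (f (xs!k))" using h by simp
  then show "c3 (\<lambda>x y z. P (f x) (f y) (f z)) xs" unfolding c3_def using h by blast
next
  assume "c3 (\<lambda>x y z. P (f x) (f y) (f z)) xs"
  then obtain i j k where h: "i<j" "j<k" "k<length xs" "P (f (xs!i)) (f (xs!j)) (f (xs!k))" unfolding c3_def by blast
  have "i < length xs" "j < length xs" using h by linarith+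
  then have "P (map f xs!i) (map f xs!j) (map f xs!k)" using h by simp
  then show "c3 P (map f xs)" unfolding c3_def using h by (intro exI[of _ i] exI[of _ j] exI[of _ k]) simp
qed

lemma av213: "avoiders n [2,1,3] = {p \<in> perms n. \<not> c3 P213 p}"
proof -
  have "contains_pattern p [2,1,3] = c3 P213 p" for p
    unfolding contains3 by (rule c3_cong_on) (auto simp: P213_def)
  then show ?thesis unfolding avoiders_def by simp
qed

lemma av312: "avoiders n [3,1,2] = {p \<in> perms n. \<not> c3 P312 p}"
proof -
  have "contains_pattern p [3,1,2] = c3 P312 p" for p
    unfolding contains3 by (rule c3_cong_on) (auto simp: P312_def)
  then show ?thesis unfolding avoiders_def by simp
qed

lemma av132: "avoiders n [1,3,2] = {p \<in> perms n. \<not> c3 P132 p}"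
proof -
  have "contains_pattern p [1,3,2] = c3 P132 p" for p
    unfolding contains3 by (rule c3_cong_on) (auto simp: P132_def)
  then show ?thesis unfolding avoiders_def by simp
qed

lemma av231: "avoiders n [2,3,1] = {p \<in> perms n. \<not> c3 P231 p}"
proof -
  have "contains_pattern p [2,3,1] = c3 P231 p" for p
    unfolding contains3 by (rule c3_cong_on) (auto simp: P231_def)
  then show ?thesis unfolding avoiders_def by simp
qed

definition cm :: "nat \<Rightarrow> nat list \<Rightarrow> nat list" where "cm n p = map (\<lambda>x. Suc n - x) p"

lemma cm_perm: assumes "p \<in> perms n" shows "cm n p \<in> perms n" "cm n (cm n p) = p"
proof -
  have p: "length p = n" "distinct p" "set p = {1..n}" using assms by (auto simp: perms_def)
  have inj: "inj_on (\<lambda>x. Suc n - x) {1..n}" by (auto simp: inj_on_def)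
  have im: "(\<lambda>x. Suc n - x) ` {1..n} = {1..n}"
  proof
    show "(\<lambda>x. Suc n - x) ` {1..n} \<subseteq> {1..n}" by auto
    show "{1..n} \<subseteq> (\<lambda>x. Suc n - x) ` {1..n}"
    proof
      fix y assume y: "y \<in> {1..n}"
      then have "y = Suc n - (Suc n - y)" "Suc n - y \<in> {1..n}" by auto
      then show "y \<in> (\<lambda>x. Suc n - x) ` {1..n}" by (rule image_eqI)
    qed
  qed
  have "distinct (cm n p)" unfolding cm_def using p inj by (simp add: distinct_map)
  moreover have "set (cm n p) = {1..n}" unfolding cm_def using p im by simp
  ultimately show "cm n p \<in> perms n" using p by (simp add: perms_def cm_def)
  show "cm n (cm n p) = p" unfolding cm_def using p by (auto intro!: map_idI)
qed

lemma cm_c3_132: "p \<in> perms n \<Longrightarrow> c3 P132 (cm n p) = c3 P312 p"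
  unfolding cm_def c3_map
  by (rule c3_cong_on) (auto simp: P132_def P312_def perms_def)

lemma cm_c3_231: "p \<in> perms n \<Longrightarrow> c3 P231 (cm n p) = c3 P213 p"
  unfolding cm_def c3_map
  by (rule c3_cong_on) (auto simp: P231_def P213_def perms_def)

lemma cm_c3_312: "p \<in> perms n \<Longrightarrow> c3 P312 (cm n p) = c3 P132 p"
  unfolding cm_def c3_map
  by (rule c3_cong_on) (auto simp: P132_def P312_def perms_def)

lemma cm_c3_213: "p \<in> perms n \<Longrightarrow> c3 P213 (cm n p) = c3 P231 p"
  unfolding cm_def c3_map
  by (rule c3_cong_on) (auto simp: P231_def P213_def perms_def)

lemma cm_bij1: "bij_betw (cm n) (avoiders n [3,1,2]) (avoiders n [1,3,2])"
  unfolding av312 av132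
  by (rule bij_betw_byWitness[where f'="cm n"]) (auto simp: cm_perm cm_c3_132 cm_c3_312)

lemma cm_bij2: "bij_betw (cm n) (avoiders n [2,1,3]) (avoiders n [2,3,1])"
  unfolding av213 av231
  by (rule bij_betw_byWitness[where f'="cm n"]) (auto simp: cm_perm cm_c3_231 cm_c3_213)

lemma cm_desc: assumes "p \<in> perms n" shows "descent_set (cm n p) = {1..<n} - descent_set p"
proof -
  have p: "length p = n" "distinct p" "set p = {1..n}" using assms by (auto simp: perms_def)
  show ?thesis
  proof (rule set_eqI)
    fix i
    show "i \<in> descent_set (cm n p) \<longleftrightarrow> i \<in> {1..<n} - descent_set p"
    proof (cases "1 \<le> i \<and> i < n")
      case True
      then have i1: "i - 1 < n" "i < n" by auto
      have v: "p!(i-1) \<le> n" "p!i \<le> n" using i1 p nth_mem by fastforce+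
      have "i - 1 \<noteq> i" using True by linarith
      then have ne: "p!(i-1) \<noteq> p!i" using p(2) i1 p(1) by (simp add: nth_eq_iff_index_eq)
      have "i \<in> descent_set (cm n p) \<longleftrightarrow> Suc n - p!(i-1) > Suc n - p!i"
        using True p(1) i1 by (simp add: descent_set_def cm_def)
      also have "\<dots> \<longleftrightarrow> p!(i-1) < p!i" using v by linarith
      also have "\<dots> \<longleftrightarrow> \<not> p!(i-1) > p!i" using ne by linarith
      also have "\<dots> \<longleftrightarrow> i \<in> {1..<n} - descent_set p" using True p(1) by (simp add: descent_set_def)
      finally show ?thesis .
    next
      case False
      then show ?thesis using p(1) by (auto simp: descent_set_def cm_def)
    qed
  qed
qed

lemma T_bij_A: "bij_betw (\<lambda>t. bA t 0) {t. sz t = n} (avoiders n [2,1,3])"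
  unfolding bij_betw_def
proof
  show "inj_on (\<lambda>t. bA t 0) {t. sz t = n}" by (auto intro: inj_onI bA_inj)
  show "(\<lambda>t. bA t 0) ` {t. sz t = n} = avoiders n [2,1,3]"
  proof
    show "(\<lambda>t. bA t 0) ` {t. sz t = n} \<subseteq> avoiders n [2,1,3]"
      unfolding av213 using bA_basic[of _ 0] bA_avoid by (auto simp: perms_def)
    show "avoiders n [2,1,3] \<subseteq> (\<lambda>t. bA t 0) ` {t. sz t = n}"
    proof
      fix p assume "p \<in> avoiders n [2,1,3]"
      then have h: "length p = n" "distinct p" "set p = {0+1..0+length p}" "\<not> c3 P213 p"
        unfolding av213 perms_def by auto
      obtain t where "sz t = length p" "p = bA t 0" using bA_surj[OF h(2,3,4)] by blast
      then show "p \<in> (\<lambda>t. bA t 0) ` {t. sz t = n}" using h(1) by auto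
    qed
  qed
qed

lemma T_bij_B: "bij_betw (\<lambda>t. bB t 0) {t. sz t = n} (avoiders n [3,1,2])"
  unfolding bij_betw_def
proof
  show "inj_on (\<lambda>t. bB t 0) {t. sz t = n}" by (auto intro: inj_onI bB_inj)
  show "(\<lambda>t. bB t 0) ` {t. sz t = n} = avoiders n [3,1,2]"
  proof
    show "(\<lambda>t. bB t 0) ` {t. sz t = n} \<subseteq> avoiders n [3,1,2]"
      unfolding av312 using bB_basic[of _ 0] bB_avoid by (auto simp: perms_def)
    show "avoiders n [3,1,2] \<subseteq> (\<lambda>t. bB t 0) ` {t. sz t = n}"
    proof
      fix p assume "p \<in> avoiders n [3,1,2]"
      then have h: "length p = n" "distinct p" "set p = {0+1..0+length p}" "\<not> c3 P312 p"
        unfolding av312 perms_def by auto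
      obtain t where "sz t = length p" "p = bB t 0" using bB_surj[OF h(2,3,4)] by blast
      then show "p \<in> (\<lambda>t. bB t 0) ` {t. sz t = n}" using h(1) by auto
    qed
  qed
qed

lemma combine:
  assumes f: "bij_betw f T A" and g: "bij_betw g T B" and D: "\<forall>t\<in>T. D (f t) = D (g t)"
  shows "\<exists>h. bij_betw h A B \<and> (\<forall>p\<in>A. D (h p) = D p)"
proof (intro exI conjI ballI)
  show "bij_betw (g \<circ> inv_into T f) A B"
    by (rule bij_betw_trans[OF bij_betw_inv_into[OF f] g])
  fix p assume p: "p \<in> A"
  have pim: "p \<in> f ` T" using f p by (simp add: bij_betw_def)
  have "inv_into T f p \<in> T" using pim by (rule inv_into_into)
  moreover have "f (inv_into T f p) = p" using pim by (rule f_inv_into_f)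
  ultimately show "D ((g \<circ> inv_into T f) p) = D p" using D by force
qed

lemma ballot_desc:
  assumes "distinct p"
  shows "ballot p \<longleftrightarrow> (\<forall>k \<le> length p. card (descent_set p \<inter> {..<k}) \<le> card ({1..<k} - descent_set p))"
proof -
  have e1: "{j. 1 \<le> j \<and> j < k \<and> p ! (j - 1) > p ! j} = descent_set p \<inter> {..<k}" if "k \<le> length p" for k
    using that by (auto simp: descent_set_def)
  have e2: "{j. 1 \<le> j \<and> j < k \<and> p ! (j - 1) < p ! j} = {1..<k} - descent_set p" if "k \<le> length p" for k
  proof (rule set_eqI)
    fix j
    show "j \<in> {j. 1 \<le> j \<and> j < k \<and> p ! (j - 1) < p ! j} \<longleftrightarrow> j \<in> {1..<k} - descent_set p"
    proof (cases "1 \<le> j \<and> j < k")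
      case True
      then have "j - 1 < length p" "j < length p" "j - 1 \<noteq> j" using that by auto
      then have "p!(j-1) \<noteq> p!j" using assms by (simp add: nth_eq_iff_index_eq)
      then show ?thesis using True that by (auto simp: descent_set_def)
    next
      case False then show ?thesis by auto
    qed
  qed
  show ?thesis unfolding ballot_def using e1 e2 by simp
qed

lemma card_ballot:
  assumes h: "bij_betw h A B" and b: "\<forall>p\<in>A. ballot (h p) = ballot p"
  shows "card {p\<in>A. ballot p} = card {q\<in>B. ballot q}"
proof -
  have "h ` {p\<in>A. ballot p} = {q\<in>B. ballot q}"
  proof
    show "h ` {p\<in>A. ballot p} \<subseteq> {q\<in>B. ballot q}" using h b by (auto simp: bij_betw_def)
    show "{q\<in>B. ballot q} \<subseteq> h ` {p\<in>A. ballot p}"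
    proof
      fix q assume q: "q \<in> {q\<in>B. ballot q}"
      then obtain p where "p \<in> A" "q = h p" using h by (auto simp: bij_betw_def)
      then show "q \<in> h ` {p\<in>A. ballot p}" using q b by auto
    qed
  qed
  moreover have "inj_on h {p\<in>A. ballot p}" using h by (auto simp: bij_betw_def intro: inj_on_subset)
  ultimately show ?thesis by (metis card_image)
qed

lemma ballot_transfer:
  assumes "bij_betw h (avoiders n s) (avoiders n s')" "\<forall>p\<in>avoiders n s. descent_set (h p) = descent_set p"
  shows "card (ballot_avoiders n s) = card (ballot_avoiders n s')"
  unfolding ballot_avoiders_def
proof (rule card_ballot[OF assms(1)], intro ballI)
  fix p assume p: "p \<in> avoiders n s"
  have hp: "h p \<in> avoiders n s'" using assms(1) p by (auto simp: bij_betw_def)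
  have dp: "distinct p" "length p = n" using p by (auto simp: avoiders_def perms_def)
  have dh: "distinct (h p)" "length (h p) = n" using hp by (auto simp: avoiders_def perms_def)
  show "ballot (h p) = ballot p"
    unfolding ballot_desc[OF dp(1)] ballot_desc[OF dh(1)] dp(2) dh(2) assms(2)[rule_format, OF p] ..
qed

theorem mainTheorem18:
  fixes n :: nat
  assumes "n \<ge> 1"
  shows "(\<exists>\<phi>. bij_betw \<phi> (avoiders n [2,1,3]) (avoiders n [3,1,2]) \<and>
            (\<forall>p \<in> avoiders n [2,1,3]. descent_set (\<phi> p) = descent_set p))
       \<and> (\<exists>\<eta>. bij_betw \<eta> (avoiders n [1,3,2]) (avoiders n [2,3,1]) \<and>
            (\<forall>p \<in> avoiders n [1,3,2]. descent_set (\<eta> p) = descent_set p))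
       \<and> card (ballot_avoiders n [2,1,3]) = card (ballot_avoiders n [3,1,2])
       \<and> card (ballot_avoiders n [1,3,2]) = card (ballot_avoiders n [2,3,1])"
proof -
  have E1: "\<exists>\<phi>. bij_betw \<phi> (avoiders n [2,1,3]) (avoiders n [3,1,2]) \<and>
            (\<forall>p \<in> avoiders n [2,1,3]. descent_set (\<phi> p) = descent_set p)"
    by (rule combine[OF T_bij_A T_bij_B]) (simp add: desc_AB)
  have bA': "bij_betw (cm n \<circ> (\<lambda>t. bA t 0)) {t. sz t = n} (avoiders n [2,3,1])"
    by (rule bij_betw_trans[OF T_bij_A cm_bij2])
  have bB': "bij_betw (cm n \<circ> (\<lambda>t. bB t 0)) {t. sz t = n} (avoiders n [1,3,2])"
    by (rule bij_betw_trans[OF T_bij_B cm_bij1])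
  have DD: "\<forall>t\<in>{t. sz t = n}. descent_set ((cm n \<circ> (\<lambda>t. bB t 0)) t) = descent_set ((cm n \<circ> (\<lambda>t. bA t 0)) t)"
  proof
    fix t assume t: "t \<in> {t. sz t = n}"
    have "bA t 0 \<in> perms n" "bB t 0 \<in> perms n" using t bA_basic[of t 0] bB_basic[of t 0] by (auto simp: perms_def)
    then show "descent_set ((cm n \<circ> (\<lambda>t. bB t 0)) t) = descent_set ((cm n \<circ> (\<lambda>t. bA t 0)) t)"
      by (simp add: cm_desc desc_AB[of t 0 0])
  qed
  have E2: "\<exists>\<eta>. bij_betw \<eta> (avoiders n [1,3,2]) (avoiders n [2,3,1]) \<and>
            (\<forall>p \<in> avoiders n [1,3,2]. descent_set (\<eta> p) = descent_set p)"
    by (rule combine[OF bB' bA' DD])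
  from E1 obtain \<phi> where \<phi>: "bij_betw \<phi> (avoiders n [2,1,3]) (avoiders n [3,1,2])"
      "\<forall>p \<in> avoiders n [2,1,3]. descent_set (\<phi> p) = descent_set p" by blast
  from E2 obtain \<eta> where \<eta>: "bij_betw \<eta> (avoiders n [1,3,2]) (avoiders n [2,3,1])"
      "\<forall>p \<in> avoiders n [1,3,2]. descent_set (\<eta> p) = descent_set p" by blast
  show ?thesis using E1 E2 ballot_transfer[OF \<phi>] ballot_transfer[OF \<eta>] by blast
qed

end
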